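(* Let $\mathcal{A}$ be an infinite set. There exists a continuous locally finite-dimensional map $\eta:\mathfrak{S}(\mathcal{A})\to\boldsymbol{\Sigma}(\mathcal{A})$ such that $\overline{\operatorname{car}_\eta}^*(y)\subseteq\operatorname{car}(y)$ for every $y\in\mathfrak{S}(\mathcal{A})$. Consequently, if $X$ is a space and $\xi:X\to\mathfrak{S}(\mathcal{A})$ is continuous, then $\eta\circ\xi:X\to\boldsymbol{\Sigma}(\mathcal{A})$ is a continuous locally finite-dimensional map with $\overline{\operatorname{car}_{\eta\circ\xi}}^*(p)\subseteq\operatorname{car}_\xi(p)$ for every $p\in X$.
   Context: $\ell_1(\mathcal{A})$ is the Banach space of all $y:\mathcal{A}\to\mathbb{R}$ with $\|y\|_1=\sum_{\alpha}|y(\alpha)|<\infty$; $\mathbf{c}_{00}(\mathcal{A})\subseteq\ell_1(\mathcal{A})$ is the subspace of finitely supported functions. $\mathfrak{S}(\mathcal{A})=\{y\in\ell_1(\mathcal{A}): y(\alpha)\ge0\ \forall\alpha,\ \|y\|_1=1\}$ and $\boldsymbol{\Sigma}(\mathcal{A})=\mathfrak{S}(\mathcal{A})\cap\mathbf{c}_{00}(\mathcal{A})$, both with the $\|\cdot\|_1$-norm topology. $\operatorname{car}(y)=\{\alpha: y(\alpha)\neq0\}$; for a map $\zeta$ into $\mathbb{R}^{\mathcal{A}}$, $\operatorname{car}_\zeta(x)=\operatorname{car}(\zeta[x])$, where $\zeta[x]$ is the value at $x$. A map into a vector space is locally finite-dimensional if every point has an open neighbourhood mapped into a finite-dimensional linear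 subspace. For a cover $\Omega:Z\rightrightarrows\mathcal{A}$ of a space $Z$ (a map assigning nonempty subsets of $\mathcal{A}$), $\overline{\Omega}^*(p)=\bigcap\{\bigcup_{z\in U}\Omega(z): U\subseteq Z \text{ open}, p\in U\}$; equivalently $(\overline{\Omega}^* )^{-1}(\alpha)$ is the closure of $\Omega^{-1}(\alpha)=\{z:\alpha\in\Omega(z)\}$. *)

theory Defs
  imports "HOL-Analysis.Analysis"
begin

text \<open>The index set A is rendered as the universe of a type 'a. Elements of R^A are
  functions 'a \<Rightarrow> real.\<close>

definition ell1 :: "('a \<Rightarrow> real) set" where
  "ell1 = {y. (\<lambda>\<alpha>. \<bar>y \<alpha>\<bar>) summable_on UNIV}"

definition l1norm :: "('a \<Rightarrow> real) \<Rightarrow> real" where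
  "l1norm y = (\<Sum>\<^sub>\<infinity>\<alpha>. \<bar>y \<alpha>\<bar>)"

definition l1dist :: "('a \<Rightarrow> real) \<Rightarrow> ('a \<Rightarrow> real) \<Rightarrow> real" where
  "l1dist y z = l1norm (\<lambda>\<alpha>. y \<alpha> - z \<alpha>)"

definition l1top :: "('a \<Rightarrow> real) set \<Rightarrow> ('a \<Rightarrow> real) topology" where
  "l1top S = subtopology (Metric_space.mtopology ell1 l1dist) S"

definition car :: "('a \<Rightarrow> real) \<Rightarrow> 'a set" where
  "car y = {\<alpha>. y \<alpha> \<noteq> 0}"

definition c00 :: "('a \<Rightarrow> real) set" where
  "c00 = {y \<in> ell1. finite (car y)}"

definition simplexS :: "('a \<Rightarrow> real) set" where
  "simplexS = {y \<in> ell1. (\<forall>\<alpha>. 0 \<le> y \<alpha>) \<and> l1norm y = 1}"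

definition simplexSigma :: "('a \<Rightarrow> real) set" where
  "simplexSigma = simplexS \<inter> c00"

definition fspan :: "('a \<Rightarrow> real) set \<Rightarrow> ('a \<Rightarrow> real) set" where
  "fspan B = {v. \<exists>F c. finite F \<and> F \<subseteq> B \<and> v = (\<lambda>\<alpha>. \<Sum>b\<in>F. c b * b \<alpha>)}"

definition fin_dim_subspace :: "('a \<Rightarrow> real) set \<Rightarrow> bool" where
  "fin_dim_subspace V \<longleftrightarrow> (\<exists>B. finite B \<and> V = fspan B)"

definition locally_fin_dim :: "'b topology \<Rightarrow> ('b \<Rightarrow> ('a \<Rightarrow> real)) \<Rightarrow> bool" where
  "locally_fin_dim X f \<longleftrightarrow>
     (\<forall>x\<in>topspace X. \<exists>U V. openin X U \<and> x \<in> U \<and> fin_dim_subspace V \<and> f ` U \<subseteq> V)"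

definition cover_closure_star :: "'b topology \<Rightarrow> ('b \<Rightarrow> 'a set) \<Rightarrow> 'b \<Rightarrow> 'a set" where
  "cover_closure_star X \<Omega> p = \<Inter> {\<Union> (\<Omega> ` U) | U. openin X U \<and> p \<in> U}"

end

theory Submission
  imports Defs
begin

lemma ell1_iff: "y \<in> ell1 \<longleftrightarrow> (\<lambda>\<alpha>. \<bar>y \<alpha>\<bar>) summable_on UNIV"
  by (simp add: ell1_def)

lemma l1norm_nonneg: "0 \<le> l1norm y"
  unfolding l1norm_def by (rule infsum_nonneg) simp

lemma l1norm_finite_le:
  assumes "y \<in> ell1" "finite F"
  shows "(\<Sum>\<alpha>\<in>F. \<bar>y \<alpha>\<bar>) \<le> l1norm y"
  unfolding l1norm_def
  by (rule finite_sum_le_infsum) (use assms in \<open>auto simp: ell1_iff\<close>)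

lemma l1norm_coord:
  assumes "y \<in> ell1"
  shows "\<bar>y \<alpha>\<bar> \<le> l1norm y"
  using l1norm_finite_le[OF assms, of "{\<alpha>}"] by simp

lemma ell1_diff:
  assumes "y \<in> ell1" "z \<in> ell1"
  shows "(\<lambda>\<alpha>. y \<alpha> - z \<alpha>) \<in> ell1"
proof -
  have "(\<lambda>\<alpha>. \<bar>y \<alpha>\<bar> + \<bar>z \<alpha>\<bar>) summable_on UNIV"
    using assms by (intro summable_on_add) (auto simp: ell1_iff)
  then show ?thesis unfolding ell1_iff
    by (rule summable_on_comparison_test) auto
qed

lemma l1norm_triangle:
  assumes "y \<in> ell1" "z \<in> ell1"
  shows "l1norm (\<lambda>\<alpha>. y \<alpha> + z \<alpha>) \<le> l1norm y + l1norm z"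
proof -
  have s: "(\<lambda>\<alpha>. \<bar>y \<alpha>\<bar> + \<bar>z \<alpha>\<bar>) summable_on UNIV"
    using assms by (intro summable_on_add) (auto simp: ell1_iff)
  have s2: "(\<lambda>\<alpha>. \<bar>y \<alpha> + z \<alpha>\<bar>) summable_on UNIV"
    using s by (rule summable_on_comparison_test) auto
  have "l1norm (\<lambda>\<alpha>. y \<alpha> + z \<alpha>) \<le> (\<Sum>\<^sub>\<infinity>\<alpha>. \<bar>y \<alpha>\<bar> + \<bar>z \<alpha>\<bar>)"
    unfolding l1norm_def by (rule infsum_mono[OF s2 s]) auto
  also have "\<dots> = l1norm y + l1norm z"
    unfolding l1norm_def using assms by (intro infsum_add) (auto simp: ell1_iff)
  finally show ?thesis .
qed

lemma l1norm_finite_support: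
  assumes "finite F" "car y \<subseteq> F"
  shows "y \<in> ell1" "l1norm y = (\<Sum>\<alpha>\<in>F. \<bar>y \<alpha>\<bar>)"
proof -
  have eq: "(\<Sum>\<^sub>\<infinity>\<alpha>\<in>UNIV. \<bar>y \<alpha>\<bar>) = (\<Sum>\<^sub>\<infinity>\<alpha>\<in>F. \<bar>y \<alpha>\<bar>)"
    by (rule infsum_cong_neutral) (use assms in \<open>auto simp: car_def\<close>)
  have "(\<lambda>\<alpha>. \<bar>y \<alpha>\<bar>) summable_on UNIV \<longleftrightarrow> (\<lambda>\<alpha>. \<bar>y \<alpha>\<bar>) summable_on F"
    by (rule summable_on_cong_neutral) (use assms in \<open>auto simp: car_def\<close>)
  then show "y \<in> ell1" using assms by (simp add: ell1_iff)
  show "l1norm y = (\<Sum>\<alpha>\<in>F. \<bar>y \<alpha>\<bar>)" using eq assms by (simp add: l1norm_def)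
qed

lemma l1norm_zero:
  assumes "y \<in> ell1" "l1norm y = 0"
  shows "y \<alpha> = 0"
  using l1norm_coord[OF assms(1), of \<alpha>] assms(2) by simp

lemma finite_level:
  assumes "y \<in> ell1" "c > 0"
  shows "finite {\<alpha>. c < \<bar>y \<alpha>\<bar>}"
proof (rule ccontr)
  assume inf: "infinite {\<alpha>. c < \<bar>y \<alpha>\<bar>}"
  obtain n :: nat where n: "l1norm y / c < n" using reals_Archimedean2 by blast
  obtain F where F: "finite F" "F \<subseteq> {\<alpha>. c < \<bar>y \<alpha>\<bar>}" "card F = n"
    using infinite_arbitrarily_large[OF inf] by blast
  have "real n * c \<le> (\<Sum>\<alpha>\<in>F. \<bar>y \<alpha>\<bar>)"
    using sum_mono[of F "\<lambda>_. c" "\<lambda>\<alpha>. \<bar>y \<alpha>\<bar>"] F by force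
  also have "\<dots> \<le> l1norm y" by (rule l1norm_finite_le[OF assms(1) F(1)])
  finally have "real n * c \<le> l1norm y" .
  with n assms(2) show False by (simp add: field_simps)
qed

lemma l1_metric: "Metric_space ell1 l1dist"
proof
  fix x y z :: "'a \<Rightarrow> real"
  show "0 \<le> l1dist x y" by (simp add: l1dist_def l1norm_nonneg)
  show "l1dist x y = l1dist y x" by (simp add: l1dist_def l1norm_def abs_minus_commute)
  assume xy: "x \<in> ell1" "y \<in> ell1"
  show "(l1dist x y = 0) = (x = y)"
  proof
    assume "l1dist x y = 0"
    then have "\<And>\<alpha>. x \<alpha> - y \<alpha> = 0"
      using l1norm_zero[OF ell1_diff[OF xy]] by (simp add: l1dist_def)
    then show "x = y" by auto
  qed (simp add: l1dist_def l1norm_def)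
  assume z: "z \<in> ell1"
  have "l1norm (\<lambda>\<alpha>. (x \<alpha> - y \<alpha>) + (y \<alpha> - z \<alpha>)) \<le> l1norm (\<lambda>\<alpha>. x \<alpha> - y \<alpha>) + l1norm (\<lambda>\<alpha>. y \<alpha> - z \<alpha>)"
    by (rule l1norm_triangle) (use xy z ell1_diff in auto)
  then show "l1dist x z \<le> l1dist x y + l1dist y z" by (simp add: l1dist_def)
qed

interpretation L1: Metric_space ell1 l1dist by (rule l1_metric)

lemma l1dist_coord: "y \<in> ell1 \<Longrightarrow> z \<in> ell1 \<Longrightarrow> \<bar>y \<alpha> - z \<alpha>\<bar> \<le> l1dist y z"
  unfolding l1dist_def by (rule l1norm_coord) (rule ell1_diff)

lemma topspace_l1top: "topspace (l1top S) = ell1 \<inter> S"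
  by (simp add: l1top_def)

lemma lipschitz_cont:
  assumes "\<And>y z. y \<in> ell1 \<inter> S \<Longrightarrow> z \<in> ell1 \<inter> S \<Longrightarrow> \<bar>f z - f y\<bar> \<le> l1dist z y"
  shows "continuous_map (l1top S) euclideanreal f"
  unfolding Met_TC.continuous_map_to_metric [simplified] 
proof (intro ballI allI impI)
  fix x and e :: real assume x: "x \<in> topspace (l1top S)" and e: "e > 0"
  show "\<exists>U. openin (l1top S) U \<and> x \<in> U \<and> (\<forall>y\<in>U. dist (f x) (f y) < e)"
  proof (intro exI conjI ballI)
    show "openin (l1top S) (S \<inter> L1.mball x e)"
      unfolding l1top_def by (rule openin_subtopology_Int2) simp
    show "x \<in> S \<inter> L1.mball x e" using x e by (auto simp: topspace_l1top)
    fix y assume y: "y \<in> S \<inter> L1.mball x e"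
    then have "\<bar>f y - f x\<bar> \<le> l1dist y x" using x assms by (auto simp: topspace_l1top)
    also have "\<dots> < e" using y L1.commute[of y x] by auto
    finally show "dist (f x) (f y) < e" by (metis abs_minus_commute dist_real_def)
  qed
qed

definition mx :: "('a \<Rightarrow> real) \<Rightarrow> real" where "mx y = Sup (range y)"
definition Pp :: "('a \<Rightarrow> real) \<Rightarrow> 'a \<Rightarrow> real" where "Pp y \<alpha> = max (y \<alpha> - mx y / 2) 0"
definition Gs :: "('a \<Rightarrow> real) \<Rightarrow> 'a set" where "Gs y = {\<alpha>. mx y / 2 < y \<alpha>}"
definition Nn :: "('a \<Rightarrow> real) \<Rightarrow> real" where "Nn y = sum (Pp y) (Gs y)"
definition eta :: "('a \<Rightarrow> real) \<Rightarrow> ('a \<Rightarrow> real)" where "eta y = (\<lambda>\<alpha>. Pp y \<alpha> / Nn y)"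
definition Fs :: "('a \<Rightarrow> real) \<Rightarrow> 'a set" where "Fs y = {\<alpha>. mx y / 4 < y \<alpha>}"

lemma S_ell1: "y \<in> simplexS \<Longrightarrow> y \<in> ell1" by (simp add: simplexS_def)
lemma S_nonneg: "y \<in> simplexS \<Longrightarrow> 0 \<le> y \<alpha>" by (simp add: simplexS_def)
lemma S_le1: "y \<in> simplexS \<Longrightarrow> y \<alpha> \<le> 1"
  using l1norm_coord[of y \<alpha>] by (auto simp: simplexS_def)
lemma S_bdd: "y \<in> simplexS \<Longrightarrow> bdd_above (range y)"
  by (rule bdd_aboveI[where M=1]) (auto simp: S_le1)
lemma mx_ge: "y \<in> simplexS \<Longrightarrow> y \<alpha> \<le> mx y"
  unfolding mx_def by (rule cSup_upper) (auto simp: S_bdd)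
lemma mx_pos: assumes "y \<in> simplexS" shows "0 < mx y"
proof -
  obtain \<alpha> where "y \<alpha> \<noteq> 0"
  proof (rule ccontr)
    assume "\<not> thesis" with that have "\<forall>\<alpha>. y \<alpha> = 0" by blast
    then have "l1norm y = 0" by (simp add: l1norm_def)
    with assms show False by (simp add: simplexS_def)
  qed
  then have "0 < y \<alpha>" using S_nonneg[OF assms, of \<alpha>] by simp
  also have "\<dots> \<le> mx y" by (rule mx_ge[OF assms])
  finally show ?thesis .
qed
lemma mx_le: "y \<in> simplexS \<Longrightarrow> (\<And>\<alpha>. y \<alpha> \<le> c) \<Longrightarrow> mx y \<le> c"
  unfolding mx_def by (rule cSup_least) auto

lemma Gs_fin: assumes "y \<in> simplexS" shows "finite (Gs y)"
proof -
  have "finite {\<alpha>. mx y / 2 < \<bar>y \<alpha>\<bar>}"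
    by (rule finite_level) (use assms S_ell1 mx_pos in auto)
  then show ?thesis unfolding Gs_def using S_nonneg[OF assms] by simp
qed
lemma Fs_fin: assumes "y \<in> simplexS" shows "finite (Fs y)"
proof -
  have "finite {\<alpha>. mx y / 4 < \<bar>y \<alpha>\<bar>}"
    by (rule finite_level) (use assms S_ell1 mx_pos in auto)
  then show ?thesis unfolding Fs_def using S_nonneg[OF assms] by simp
qed
lemma Fs_car: assumes "y \<in> simplexS" shows "Fs y \<subseteq> car y"
  using mx_pos[OF assms] by (auto simp: Fs_def car_def)

lemma Gs_ne: assumes "y \<in> simplexS" obtains \<alpha> where "mx y / 2 < y \<alpha>"
proof -
  have "mx y / 2 < Sup (range y)" using mx_pos[OF assms] by (simp add: mx_def)
  then show ?thesis using that by (subst (asm) less_cSup_iff) (auto simp: S_bdd[OF assms])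
qed

lemma Nn_pos: assumes "y \<in> simplexS" shows "0 < Nn y"
proof -
  obtain \<alpha> where a: "mx y / 2 < y \<alpha>" using Gs_ne[OF assms] by blast
  show ?thesis unfolding Nn_def
    by (rule sum_pos2[of _ \<alpha>]) (use a Gs_fin[OF assms] in \<open>auto simp: Gs_def Pp_def\<close>)
qed

lemma car_Pp: "car (Pp y) = Gs y" by (auto simp: car_def Pp_def Gs_def)
lemma car_eta: assumes "y \<in> simplexS" shows "car (eta y) = Gs y"
  using Nn_pos[OF assms] by (auto simp: car_def eta_def Pp_def Gs_def)

lemma eta_Sigma: assumes "y \<in> simplexS" shows "eta y \<in> simplexSigma"
proof -
  note fin = Gs_fin[OF assms] and ce = car_eta[OF assms] and N = Nn_pos[OF assms]
  have e: "eta y \<in> ell1" using l1norm_finite_support(1)[OF fin] ce by auto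
  have "l1norm (eta y) = (\<Sum>\<alpha>\<in>Gs y. \<bar>eta y \<alpha>\<bar>)" using l1norm_finite_support(2)[OF fin] ce by auto
  also have "\<dots> = (\<Sum>\<alpha>\<in>Gs y. Pp y \<alpha>) / Nn y"
    unfolding sum_divide_distrib using N by (intro sum.cong) (auto simp: eta_def Pp_def)
  also have "\<dots> = 1" using N by (simp add: Nn_def)
  finally show ?thesis using e fin ce N
    by (auto simp: simplexSigma_def simplexS_def c00_def eta_def Pp_def)
qed

lemma mx_lip: assumes "y \<in> simplexS" "z \<in> simplexS" shows "\<bar>mx y - mx z\<bar> \<le> l1dist y z"
proof -
  have "mx y \<le> mx z + l1dist y z"
  proof (rule mx_le[OF assms(1)])
    fix \<alpha> show "y \<alpha> \<le> mx z + l1dist y z"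
      using l1dist_coord[OF S_ell1[OF assms(1)] S_ell1[OF assms(2)], of \<alpha>] mx_ge[OF assms(2), of \<alpha>] by linarith
  qed
  moreover have "mx z \<le> mx y + l1dist y z"
  proof (rule mx_le[OF assms(2)])
    fix \<alpha> show "z \<alpha> \<le> mx y + l1dist y z"
      using l1dist_coord[OF S_ell1[OF assms(1)] S_ell1[OF assms(2)], of \<alpha>] mx_ge[OF assms(1), of \<alpha>] by linarith
  qed
  ultimately show ?thesis by linarith
qed

lemma local_Gs:
  assumes "y \<in> simplexS" "z \<in> simplexS" "l1dist z y < mx y / 8"
  shows "Gs z \<subseteq> Fs y"
proof
  fix \<alpha> assume a: "\<alpha> \<in> Gs z"
  have m: "\<bar>mx z - mx y\<bar> \<le> l1dist z y" by (rule mx_lip[OF assms(2,1)])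
  have c: "\<bar>z \<alpha> - y \<alpha>\<bar> \<le> l1dist z y" by (rule l1dist_coord[OF S_ell1[OF assms(2)] S_ell1[OF assms(1)]])
  show "\<alpha> \<in> Fs y" using a m c assms(3) mx_pos[OF assms(1)] by (auto simp: Gs_def Fs_def)
qed

definition Us :: "('a \<Rightarrow> real) \<Rightarrow> ('a \<Rightarrow> real) set" where
  "Us y = simplexS \<inter> L1.mball y (mx y / 8)"

lemma Us_open: "openin (l1top simplexS) (Us y)"
  unfolding l1top_def Us_def by (rule openin_subtopology_Int2) simp

lemma Us_mem: "y \<in> simplexS \<Longrightarrow> y \<in> Us y"
  using mx_pos[of y] S_ell1[of y] by (auto simp: Us_def)

lemma Us_Gs: assumes "y \<in> simplexS" "z \<in> Us y" shows "Gs z \<subseteq> Fs y" "z \<in> simplexS"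
proof -
  show z: "z \<in> simplexS" using assms by (auto simp: Us_def)
  have "l1dist z y < mx y / 8" using assms L1.commute[of y z] by (auto simp: Us_def)
  then show "Gs z \<subseteq> Fs y" by (rule local_Gs[OF assms(1) z])
qed

lemma Us_car: assumes "y \<in> simplexS" "z \<in> Us y" shows "car (eta z) \<subseteq> Fs y"
  using Us_Gs[OF assms] car_eta by auto

lemma Us_Nn: assumes "y \<in> simplexS" "z \<in> Us y"
  shows "Nn z = (\<Sum>\<beta>\<in>Fs y. Pp z \<beta>)"
proof -
  note G = Us_Gs[OF assms]
  show ?thesis unfolding Nn_def
    by (rule sum.mono_neutral_left) (use G Fs_fin[OF assms(1)] in \<open>auto simp: Gs_def Pp_def\<close>)
qed

lemma Us_eta: assumes "y \<in> simplexS" "z \<in> Us y"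
  shows "eta z = (\<lambda>\<alpha>. Pp z \<alpha> / (\<Sum>\<beta>\<in>Fs y. Pp z \<beta>))"
  using Us_Nn[OF assms] by (simp add: eta_def)

lemma cont_coord: "continuous_map (l1top simplexS) euclideanreal (\<lambda>z. z \<alpha>)"
  by (rule lipschitz_cont) (auto intro: l1dist_coord)

lemma cont_mx: "continuous_map (l1top simplexS) euclideanreal mx"
  by (rule lipschitz_cont) (auto intro: mx_lip)

lemma eta_cont: "continuous_map (l1top simplexS) (L1.mtopology) eta"
  unfolding L1.continuous_map_to_metric
proof (intro ballI allI impI)
  fix y and e :: real assume y: "y \<in> topspace (l1top simplexS)" and e: "0 < e"
  then have yS: "y \<in> simplexS" by (simp add: topspace_l1top)
  define Q where "Q = (\<lambda>z \<alpha>. Pp z \<alpha> / (\<Sum>\<beta>\<in>Fs y. Pp z \<beta>))"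
  define g where "g = (\<lambda>z. \<Sum>\<alpha>\<in>Fs y. \<bar>Q z \<alpha> - Q y \<alpha>\<bar>)"
  let ?X = "subtopology (l1top simplexS) (Us y)"
  have tX: "topspace ?X \<subseteq> Us y" by simp
  have cPp: "continuous_map ?X euclideanreal (\<lambda>z. Pp z \<alpha>)" for \<alpha>
    unfolding Pp_def
    by (intro continuous_intros continuous_map_from_subtopology cont_coord cont_mx) auto
  have "continuous_map ?X euclideanreal g"
    unfolding g_def Q_def
  proof (intro continuous_intros cPp Fs_fin[OF yS])
    fix z assume "z \<in> topspace ?X"
    then have z: "z \<in> Us y" using tX by blast
    have "0 < Nn z" by (rule Nn_pos[OF Us_Gs(2)[OF yS z]])
    moreover have "Nn z = (\<Sum>\<beta>\<in>Fs y. Pp z \<beta>)" by (rule Us_Nn[OF yS z])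
    ultimately show "(\<Sum>\<beta>\<in>Fs y. Pp z \<beta>) \<noteq> 0" by simp
  qed simp
  then have cg: "\<forall>x\<in>topspace ?X. \<forall>\<epsilon>>0. \<exists>U. openin ?X U \<and> x \<in> U \<and> (\<forall>z\<in>U. dist (g x) (g z) < \<epsilon>)"
    unfolding Met_TC.continuous_map_to_metric[simplified] .
  have yX: "y \<in> topspace ?X" using Us_mem[OF yS] y by simp
  obtain V where V: "openin ?X V" "y \<in> V" "\<forall>z\<in>V. dist (g y) (g z) < e"
    using cg[rule_format, OF yX e] by blast
  show "\<exists>U. openin (l1top simplexS) U \<and> y \<in> U \<and> (\<forall>z\<in>U. eta z \<in> L1.mball (eta y) e)"
  proof (intro exI conjI ballI)
    show "openin (l1top simplexS) V" using V(1) Us_open openin_trans_full by blast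
    show "y \<in> V" by fact
    fix z assume zV: "z \<in> V"
    then have z: "z \<in> Us y" using openin_imp_subset[OF V(1)] tX by blast
    have zS: "z \<in> simplexS" using Us_Gs(2)[OF yS z] .
    have gy: "g y = 0" by (simp add: g_def)
    have ez: "eta z = Q z" using Us_eta[OF yS z] by (simp add: Q_def)
    have ey: "eta y = Q y" using Us_eta[OF yS Us_mem[OF yS]] by (simp add: Q_def)
    have "car (\<lambda>\<alpha>. eta y \<alpha> - eta z \<alpha>) \<subseteq> Fs y"
    proof
      fix \<alpha> assume "\<alpha> \<in> car (\<lambda>\<alpha>. eta y \<alpha> - eta z \<alpha>)"
      then have "\<alpha> \<in> car (eta y) \<or> \<alpha> \<in> car (eta z)" by (auto simp: car_def)
      then show "\<alpha> \<in> Fs y" using Us_car[OF yS z] Us_car[OF yS Us_mem[OF yS]] by blast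
    qed
    then have "l1dist (eta y) (eta z) = (\<Sum>\<alpha>\<in>Fs y. \<bar>eta y \<alpha> - eta z \<alpha>\<bar>)"
      unfolding l1dist_def by (rule l1norm_finite_support(2)[OF Fs_fin[OF yS]])
    also have "\<dots> = g z" unfolding g_def ez ey by (simp add: abs_minus_commute)
    also have "\<dots> < e"
    proof -
      have "dist (g y) (g z) < e" using V(3) zV by blast
      then show ?thesis using gy by (simp add: dist_real_def)
    qed
    finally show "eta z \<in> L1.mball (eta y) e"
      using eta_Sigma[OF yS] eta_Sigma[OF zS] by (auto simp: simplexSigma_def simplexS_def)
  qed
qed

lemma fspan_support:
  assumes "finite F" "car v \<subseteq> F"
  shows "v \<in> fspan ((\<lambda>\<alpha> \<beta>. if \<beta> = \<alpha> then 1 else 0) ` F)"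
proof -
  define e :: "'a \<Rightarrow> 'a \<Rightarrow> real" where "e = (\<lambda>\<alpha> \<beta>. if \<beta> = \<alpha> then 1 else 0)"
  define c where "c = (\<lambda>b. \<Sum>\<gamma>\<in>F. b \<gamma> * v \<gamma>)"
  have inj: "inj_on e F"
  proof
    fix a b assume "e a = e b" then have "e a a = e b a" by simp
    then show "a = b" by (simp add: e_def split: if_splits)
  qed
  have ce: "c (e \<alpha>) = v \<alpha>" if "\<alpha> \<in> F" for \<alpha>
  proof -
    have "c (e \<alpha>) = (\<Sum>\<gamma>\<in>F. if \<gamma> = \<alpha> then v \<gamma> else 0)"
      unfolding c_def e_def by (intro sum.cong) auto
    also have "\<dots> = v \<alpha>" using sum.delta[OF assms(1), of \<alpha> v] that by simp
    finally show ?thesis .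
  qed
  have "v = (\<lambda>\<beta>. \<Sum>b\<in>e ` F. c b * b \<beta>)"
  proof
    fix \<beta>
    have "(\<Sum>b\<in>e ` F. c b * b \<beta>) = (\<Sum>\<alpha>\<in>F. c (e \<alpha>) * e \<alpha> \<beta>)"
      by (simp add: sum.reindex[OF inj])
    also have "\<dots> = (\<Sum>\<alpha>\<in>F. v \<alpha> * e \<alpha> \<beta>)" using ce by (intro sum.cong) auto
    also have "\<dots> = v \<beta>"
    proof -
      have "(\<Sum>\<alpha>\<in>F. v \<alpha> * e \<alpha> \<beta>) = (\<Sum>\<alpha>\<in>F. if \<alpha> = \<beta> then v \<alpha> else 0)"
        unfolding e_def by (intro sum.cong) auto
      also have "\<dots> = (if \<beta> \<in> F then v \<beta> else 0)" by (rule sum.delta[OF assms(1)])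
      also have "\<dots> = v \<beta>" using assms(2) by (auto simp: car_def)
      finally show ?thesis .
    qed
    finally show "v \<beta> = (\<Sum>b\<in>e ` F. c b * b \<beta>)" by simp
  qed
  then have "v \<in> fspan (e ` F)" unfolding fspan_def mem_Collect_eq
    by (intro exI[of _ "e ` F"] exI[of _ c] conjI) (use assms(1) in auto)
  then show ?thesis by (simp add: e_def)
qed

lemma main_local:
  assumes "y \<in> simplexS"
  shows "\<exists>U F. openin (l1top simplexS) U \<and> y \<in> U \<and> finite F \<and> F \<subseteq> car y \<and> (\<forall>z\<in>U. car (eta z) \<subseteq> F)"
  by (intro exI[of _ "Us y"] exI[of _ "Fs y"] conjI ballI Us_open Us_mem[OF assms] Fs_fin[OF assms] Fs_car[OF assms] Us_car[OF assms])

lemma fd_span: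
  assumes "finite F"
  shows "fin_dim_subspace (fspan ((\<lambda>\<alpha> \<beta>. if \<beta> = \<alpha> then (1::real) else 0) ` F))"
  unfolding fin_dim_subspace_def
  by (rule exI[of _ "(\<lambda>\<alpha> \<beta>. if \<beta> = \<alpha> then (1::real) else 0) ` F"]) (simp add: assms)

lemma gen_local:
  assumes "continuous_map X (l1top simplexS) \<xi>" "p \<in> topspace X"
  shows "\<exists>U F. openin X U \<and> p \<in> U \<and> finite F \<and> F \<subseteq> car (\<xi> p) \<and> (\<forall>q\<in>U. car (eta (\<xi> q)) \<subseteq> F)"
proof -
  have "\<xi> p \<in> topspace (l1top simplexS)" using assms(2) continuous_map_image_subset_topspace[OF assms(1)] by blast
  then have pS: "\<xi> p \<in> simplexS" by (simp add: topspace_l1top)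
  then obtain U F where UF: "openin (l1top simplexS) U" "\<xi> p \<in> U" "finite F" "F \<subseteq> car (\<xi> p)"
    "\<forall>z\<in>U. car (eta z) \<subseteq> F" using main_local[OF pS] by (elim exE conjE) (rule that)
  have o: "openin X {q \<in> topspace X. \<xi> q \<in> U}" by (rule openin_continuous_map_preimage[OF assms(1) UF(1)])
  have m: "p \<in> {q \<in> topspace X. \<xi> q \<in> U}" using assms(2) UF(2) by simp
  have s: "\<forall>q\<in>{q \<in> topspace X. \<xi> q \<in> U}. car (eta (\<xi> q)) \<subseteq> F" using UF(5) by simp
  show ?thesis by (rule exI[of _ "{q \<in> topspace X. \<xi> q \<in> U}"], rule exI[of _ F]) (intro conjI o m s UF(3,4))
qed

lemma gen_props:
  assumes "continuous_map X (l1top simplexS) \<xi>"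
  shows "locally_fin_dim X (eta \<circ> \<xi>)"
    "\<forall>p\<in>topspace X. cover_closure_star X (\<lambda>q. car ((eta \<circ> \<xi>) q)) p \<subseteq> car (\<xi> p)"
proof -
  show "locally_fin_dim X (eta \<circ> \<xi>)" unfolding locally_fin_dim_def
  proof
    fix p assume p: "p \<in> topspace X"
    obtain U F where UF: "openin X U" "p \<in> U" "finite F" "\<forall>q\<in>U. car (eta (\<xi> q)) \<subseteq> F"
      using gen_local[OF assms p] by (elim exE conjE) (rule that)
    have "(eta \<circ> \<xi>) ` U \<subseteq> fspan ((\<lambda>\<alpha> \<beta>. if \<beta> = \<alpha> then (1::real) else 0) ` F)"
    proof
      fix w assume "w \<in> (eta \<circ> \<xi>) ` U"
      then obtain q where "q \<in> U" "w = eta (\<xi> q)" by auto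
      then show "w \<in> fspan ((\<lambda>\<alpha> \<beta>. if \<beta> = \<alpha> then (1::real) else 0) ` F)"
        using fspan_support[OF UF(3)] UF(4) by simp
    qed
    show "\<exists>U V. openin X U \<and> p \<in> U \<and> fin_dim_subspace V \<and> (eta \<circ> \<xi>) ` U \<subseteq> V"
      by (rule exI[of _ U], rule exI[of _ "fspan ((\<lambda>\<alpha> \<beta>. if \<beta> = \<alpha> then (1::real) else 0) ` F)"])
        (intro conjI UF(1,2) fd_span[OF UF(3)] \<open>(eta \<circ> \<xi>) ` U \<subseteq> _\<close>)
  qed
  show "\<forall>p\<in>topspace X. cover_closure_star X (\<lambda>q. car ((eta \<circ> \<xi>) q)) p \<subseteq> car (\<xi> p)"
  proof (intro ballI subsetI)
    fix p \<alpha> assume p: "p \<in> topspace X" and a: "\<alpha> \<in> cover_closure_star X (\<lambda>q. car ((eta \<circ> \<xi>) q)) p"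
    obtain U F where UF: "openin X U" "p \<in> U" "finite F" "F \<subseteq> car (\<xi> p)" "\<forall>q\<in>U. car (eta (\<xi> q)) \<subseteq> F"
      using gen_local[OF assms p] by (elim exE conjE) (rule that)
    have "\<Union> ((\<lambda>q. car ((eta \<circ> \<xi>) q)) ` U) \<in> {\<Union> ((\<lambda>q. car ((eta \<circ> \<xi>) q)) ` U) | U. openin X U \<and> p \<in> U}"
      using UF(1,2) by blast
    then have "\<alpha> \<in> \<Union> ((\<lambda>q. car ((eta \<circ> \<xi>) q)) ` U)"
      by (rule InterD[OF a[unfolded cover_closure_star_def]])
    then obtain q where "q \<in> U" "\<alpha> \<in> car (eta (\<xi> q))" by auto
    then show "\<alpha> \<in> car (\<xi> p)" using UF(4,5) by blast
  qed
qed

theorem theorem3p1: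
  assumes "infinite (UNIV :: 'a set)"
  shows "\<exists>\<eta> :: ('a \<Rightarrow> real) \<Rightarrow> ('a \<Rightarrow> real).
     continuous_map (l1top simplexS) (l1top simplexSigma) \<eta> \<and>
     locally_fin_dim (l1top simplexS) \<eta> \<and>
     (\<forall>y\<in>simplexS. cover_closure_star (l1top simplexS) (\<lambda>z. car (\<eta> z)) y \<subseteq> car y) \<and>
     (\<forall>(X :: 'b topology) \<xi>. continuous_map X (l1top simplexS) \<xi> \<longrightarrow>
        continuous_map X (l1top simplexSigma) (\<eta> \<circ> \<xi>) \<and>
        locally_fin_dim X (\<eta> \<circ> \<xi>) \<and>
        (\<forall>p\<in>topspace X. cover_closure_star X (\<lambda>q. car ((\<eta> \<circ> \<xi>) q)) p \<subseteq> car (\<xi> p)))"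
proof (intro exI[of _ eta] conjI allI impI)
  have tS: "topspace (l1top simplexS) = simplexS" using S_ell1 by (auto simp: topspace_l1top)
  have idc: "continuous_map (l1top simplexS) (l1top simplexS) id" by simp
  show C1: "continuous_map (l1top simplexS) (l1top simplexSigma) eta"
    unfolding l1top_def[of simplexSigma] continuous_map_in_subtopology
    using eta_cont eta_Sigma tS by auto
  show "locally_fin_dim (l1top simplexS) eta"
    using gen_props(1)[OF idc] by simp
  show "\<forall>y\<in>simplexS. cover_closure_star (l1top simplexS) (\<lambda>z. car (eta z)) y \<subseteq> car y"
    using gen_props(2)[OF idc] by (simp add: tS)
  fix X :: "'b topology" and \<xi> assume c: "continuous_map X (l1top simplexS) \<xi>"
  show "continuous_map X (l1top simplexSigma) (eta \<circ> \<xi>)" by (rule continuous_map_compose[OF c C1])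
  show "locally_fin_dim X (eta \<circ> \<xi>)" by (rule gen_props(1)[OF c])
  show "\<forall>p\<in>topspace X. cover_closure_star X (\<lambda>q. car ((eta \<circ> \<xi>) q)) p \<subseteq> car (\<xi> p)"
    by (rule gen_props(2)[OF c])
qed

end
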